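(* Every well-graded $\cup$-closed family of finite sets is a partial learning space. The converse is false: there exists a partial learning space which is neither $\cup$-closed nor well-graded.
   Context: $d(K,L)=|K\triangle L|$ with $\triangle$ the symmetric difference. A family $\mathcal{K}$ is well-graded if for any two distinct $K,L\in\mathcal{K}$ there is a sequence $K_0=K,K_1,\dots,K_n=L$ in $\mathcal{K}$ with $n=d(K,L)$ and $d(K_i,K_{i+1})=1$. A family is $\cup$-closed if the union of any non-empty subfamily belongs to it. A partial knowledge structure is a family $\mathcal{F}$ of subsets of a set $Q$ with $Q=\bigcup\mathcal{F}\in\mathcal{F}$. A partial learning space is a partial knowledge structure $\mathcal{F}$ satisfying: [L1] for $K\subset L$ in $\mathcal{F}$ with $|L\setminus K|=n$ there is a chain $K=K_0\subset K_1\subset\dots\subset K_n=L$ with $K_{i+1}=K_i\cup\{q_i\}\in\mathcal{F}$, $q_i\notin K_i$; [L2] if $K\subset L$ are in $\mathcal{F}$ and $K\cup\{q\}\in\mathcal{F}$ with $q\notin K$, then $L\cup\{q\}\in\mathcal{F}$. (The family $\{\varnothing\}$ counts as well-graded, $\cup$-closed, and a partial learning space.) *)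

theory Defs
  imports Main
begin

definition setdist :: "'a set \<Rightarrow> 'a set \<Rightarrow> nat" where
  "setdist K L = card ((K - L) \<union> (L - K))"

definition well_graded :: "'a set set \<Rightarrow> bool" where
  "well_graded F \<longleftrightarrow>
     (\<forall>K\<in>F. \<forall>L\<in>F. K \<noteq> L \<longrightarrow>
        (\<exists>S :: nat \<Rightarrow> 'a set. S 0 = K \<and> S (setdist K L) = L \<and>
           (\<forall>i\<le>setdist K L. S i \<in> F) \<and>
           (\<forall>i<setdist K L. setdist (S i) (S (Suc i)) = 1)))"

definition union_closed :: "'a set set \<Rightarrow> bool" where
  "union_closed F \<longleftrightarrow> (\<forall>G. G \<subseteq> F \<and> G \<noteq> {} \<longrightarrow> \<Union>G \<in> F)"

definition partial_knowledge_structure :: "'a set set \<Rightarrow> bool" where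
  "partial_knowledge_structure F \<longleftrightarrow> \<Union>F \<in> F"

definition axiom_L1 :: "'a set set \<Rightarrow> bool" where
  "axiom_L1 F \<longleftrightarrow>
     (\<forall>K\<in>F. \<forall>L\<in>F. K \<subset> L \<longrightarrow>
        (\<exists>S :: nat \<Rightarrow> 'a set. S 0 = K \<and> S (card (L - K)) = L \<and>
           (\<forall>i<card (L - K). \<exists>q. q \<notin> S i \<and> S (Suc i) = insert q (S i)
                                  \<and> S (Suc i) \<in> F)))"

definition axiom_L2 :: "'a set set \<Rightarrow> bool" where
  "axiom_L2 F \<longleftrightarrow>
     (\<forall>K\<in>F. \<forall>L\<in>F. \<forall>q. K \<subset> L \<and> q \<notin> K \<and> insert q K \<in> F \<longrightarrow> insert q L \<in> F)"

definition partial_learning_space :: "'a set set \<Rightarrow> bool" where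
  "partial_learning_space F \<longleftrightarrow>
     partial_knowledge_structure F \<and> axiom_L1 F \<and> axiom_L2 F"

end

theory Submission
  imports Defs
begin

lemma setdist_sym: "setdist A B = setdist B A"
  unfolding setdist_def by (simp add: Un_commute)

lemma setdist_tri:
  assumes "finite A" "finite B" "finite C"
  shows "setdist A C \<le> setdist A B + setdist B C"
proof -
  have "(A - C) \<union> (C - A) \<subseteq> ((A - B) \<union> (B - A)) \<union> ((B - C) \<union> (C - B))" by blast
  hence "setdist A C \<le> card (((A - B) \<union> (B - A)) \<union> ((B - C) \<union> (C - B)))"
    unfolding setdist_def using assms by (intro card_mono) auto
  also have "\<dots> \<le> setdist A B + setdist B C" unfolding setdist_def by (rule card_Un_le)
  finally show ?thesis .
qed

lemma chain_L1:
  assumes fin: "\<forall>K\<in>F. finite K"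
    and H: "\<forall>K\<in>F. \<forall>L\<in>F. K \<subset> L \<longrightarrow> (\<exists>q\<in>L-K. insert q K \<in> F)"
  shows "axiom_L1 F"
proof -
  have main: "\<forall>K L. K\<in>F \<longrightarrow> L\<in>F \<longrightarrow> K \<subseteq> L \<longrightarrow> card (L-K) = n \<longrightarrow>
     (\<exists>S :: nat \<Rightarrow> 'a set. S 0 = K \<and> S n = L \<and>
           (\<forall>i<n. \<exists>q. q \<notin> S i \<and> S (Suc i) = insert q (S i) \<and> S (Suc i) \<in> F))" for n
  proof (induction n)
    case 0
    show ?case
    proof (intro allI impI)
      fix K L assume "K\<in>F" "L\<in>F" "K \<subseteq> L" "card (L-K) = 0"
      hence "L - K = {}" using fin \<open>L\<in>F\<close> by simp
      hence "K = L" using \<open>K \<subseteq> L\<close> by blast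
      thus "\<exists>S :: nat \<Rightarrow> 'a set. S 0 = K \<and> S 0 = L \<and>
           (\<forall>i<0. \<exists>q. q \<notin> S i \<and> S (Suc i) = insert q (S i) \<and> S (Suc i) \<in> F)"
        by (intro exI[of _ "\<lambda>_. K"]) simp
    qed
  next
    case (Suc n)
    show ?case
    proof (intro allI impI)
      fix K L assume K: "K\<in>F" and L: "L\<in>F" and sub: "K \<subseteq> L" and c: "card (L-K) = Suc n"
      hence "K \<noteq> L" by auto
      with sub have "K \<subset> L" by auto
      then obtain q where q: "q \<in> L - K" "insert q K \<in> F" using H K L by blast
      have "L - insert q K = (L - K) - {q}" by blast
      hence "card (L - insert q K) = card (L - K) - 1" using q(1) fin L by (simp add: card_Diff_singleton)
      hence "card (L - insert q K) = n" using c by simp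
      moreover have "insert q K \<subseteq> L" using q sub by auto
      ultimately obtain S' where S': "S' 0 = insert q K" "S' n = L"
        "\<forall>i<n. \<exists>q. q \<notin> S' i \<and> S' (Suc i) = insert q (S' i) \<and> S' (Suc i) \<in> F"
        using Suc.IH[rule_format, OF q(2) L] by blast
      define S where "S = (\<lambda>i. if i = 0 then K else S' (i - 1))"
      have stp: "\<forall>i<Suc n. \<exists>q. q \<notin> S i \<and> S (Suc i) = insert q (S i) \<and> S (Suc i) \<in> F"
      proof (intro allI impI)
        fix i assume i: "i < Suc n"
        show "\<exists>q. q \<notin> S i \<and> S (Suc i) = insert q (S i) \<and> S (Suc i) \<in> F"
        proof (cases i)
          case 0 thus ?thesis using q S' unfolding S_def by auto
        next
          case (Suc j)
          hence "j < n" using i by simp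
          then obtain p where "p \<notin> S' j \<and> S' (Suc j) = insert p (S' j) \<and> S' (Suc j) \<in> F"
            using S'(3) by blast
          thus ?thesis using Suc unfolding S_def by auto
        qed
      qed
      moreover have "S 0 = K" "S (Suc n) = L" using S' by (simp_all add: S_def)
      ultimately show "\<exists>S :: nat \<Rightarrow> 'a set. S 0 = K \<and> S (Suc n) = L \<and>
           (\<forall>i<Suc n. \<exists>q. q \<notin> S i \<and> S (Suc i) = insert q (S i) \<and> S (Suc i) \<in> F)"
        by blast
    qed
  qed
  show ?thesis unfolding axiom_L1_def
  proof (intro ballI impI)
    fix K L assume "K \<in> F" "L \<in> F" "K \<subset> L"
    thus "\<exists>S :: nat \<Rightarrow> 'a set. S 0 = K \<and> S (card (L - K)) = L \<and>
           (\<forall>i<card (L - K). \<exists>q. q \<notin> S i \<and> S (Suc i) = insert q (S i) \<and> S (Suc i) \<in> F)"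
      using main[of "card (L - K)", rule_format, of K L] by blast
  qed
qed

lemma symdiff_ins: assumes x: "(K - T) \<union> (T - K) = {x}" and c: "x \<notin> K" shows "T = insert x K"
proof (rule set_eqI)
  fix y
  have "y \<in> (K - T) \<union> (T - K) \<longleftrightarrow> y = x" using x by simp
  thus "y \<in> T \<longleftrightarrow> y \<in> insert x K" using c by auto
qed
lemma symdiff_del: assumes x: "(K - T) \<union> (T - K) = {x}" and c: "x \<in> K" shows "T = K - {x}"
proof (rule set_eqI)
  fix y
  have "y \<in> (K - T) \<union> (T - K) \<longleftrightarrow> y = x" using x by simp
  thus "y \<in> T \<longleftrightarrow> y \<in> K - {x}" using c by auto
qed
lemma a1: "x \<in> K \<Longrightarrow> K \<subset> L \<Longrightarrow> (K - {x} - L) \<union> (L - (K - {x})) = insert x (L - K)" by auto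
lemma a2: "x \<notin> K \<Longrightarrow> x \<notin> L - K \<Longrightarrow> K \<subset> L \<Longrightarrow> (insert x K - L) \<union> (L - insert x K) = insert x (L - K)" by auto

lemma wg_step:
  assumes fin: "\<forall>K\<in>F. finite K" and wg: "well_graded F"
    and K: "K \<in> F" and L: "L \<in> F" and sub: "K \<subset> L"
  shows "\<exists>q\<in>L-K. insert q K \<in> F"
proof -
  define n where "n = setdist K L"
  have fK: "finite K" and fL: "finite L" using fin K L by auto
  have "(K - L) \<union> (L - K) = L - K" using sub by blast
  hence nL: "n = card (L - K)" unfolding n_def setdist_def by simp
  have "L - K \<noteq> {}" using sub by blast
  hence "card (L - K) \<noteq> 0" using fL by simp
  hence npos: "n \<ge> 1" using nL by simp
  have KL: "K \<noteq> L" using sub by blast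
  obtain S where S: "S 0 = K" "S n = L" "\<forall>i\<le>n. S i \<in> F" "\<forall>i<n. setdist (S i) (S (Suc i)) = 1"
    using wg[unfolded well_graded_def, rule_format, OF K L KL] unfolding n_def by blast
  have dist: "m \<le> n \<longrightarrow> setdist (S (n - m)) L \<le> m" for m
  proof (induction m)
    case 0 thus ?case using S(2) by (simp add: setdist_def)
  next
    case (Suc m)
    show ?case
    proof
      assume m: "Suc m \<le> n"
      have a: "setdist (S (n - Suc m)) (S (n - m)) = 1"
        using S(4)[rule_format, of "n - Suc m"] m by (simp add: Suc_diff_Suc)
      have f1: "finite (S (n - Suc m))" using S(3) fin by simp
      have f2: "finite (S (n - m))" using S(3) fin by simp
      have "setdist (S (n - Suc m)) L \<le> setdist (S (n - Suc m)) (S (n - m)) + setdist (S (n - m)) L"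
        by (rule setdist_tri[OF f1 f2 fL])
      thus "setdist (S (n - Suc m)) L \<le> Suc m" using a Suc.IH m by simp
    qed
  qed
  have d1: "setdist (S 1) L \<le> n - 1" using dist[of "n - 1"] npos by simp
  have d0: "setdist K (S 1) = 1" using S(4)[rule_format, of 0] S(1) npos by simp
  define T where "T = S 1"
  have TF: "T \<in> F" using S(3) npos unfolding T_def by simp
  have "card ((K - T) \<union> (T - K)) = 1" using d0 unfolding setdist_def T_def by simp
  then obtain x where x: "(K - T) \<union> (T - K) = {x}" by (rule card_1_singletonE)
  show ?thesis
  proof (cases "x \<in> L - K")
    case True
    have "T = insert x K" using symdiff_ins[OF x] True by blast
    thus ?thesis using True TF by blast
  next
    case False
    have "(T - L) \<union> (L - T) = insert x (L - K)"
    proof (cases "x \<in> K")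
      case True
      have "T = K - {x}" using symdiff_del[OF x] True by blast
      thus ?thesis using a1[OF True sub] by simp
    next
      case c: False
      have "T = insert x K" using symdiff_ins[OF x] c by blast
      thus ?thesis using a2[OF c False sub] by simp
    qed
    moreover have "x \<notin> L - K" using False .
    ultimately have "setdist T L = Suc n" using fL nL unfolding setdist_def by simp
    thus ?thesis using d1 unfolding T_def by simp
  qed
qed

lemma part1:
  assumes ne: "F \<noteq> {}" and fin: "\<forall>K\<in>F. finite K" and wg: "well_graded F" and uc: "union_closed F"
  shows "partial_learning_space F"
proof -
  have ucr: "\<And>G. G \<subseteq> F \<Longrightarrow> G \<noteq> {} \<Longrightarrow> \<Union>G \<in> F"
    using uc unfolding union_closed_def by simp
  have pks: "partial_knowledge_structure F"
    unfolding partial_knowledge_structure_def by (rule ucr[OF order_refl ne])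
  have H: "\<forall>K\<in>F. \<forall>L\<in>F. K \<subset> L \<longrightarrow> (\<exists>q\<in>L-K. insert q K \<in> F)"
  proof (intro ballI impI)
    fix K L assume "K \<in> F" "L \<in> F" "K \<subset> L"
    thus "\<exists>q\<in>L-K. insert q K \<in> F" by (rule wg_step[OF fin wg])
  qed
  have l1: "axiom_L1 F" by (rule chain_L1[OF fin H])
  have l2: "axiom_L2 F" unfolding axiom_L2_def
  proof (intro ballI allI impI)
    fix K L q assume K: "K \<in> F" and L: "L \<in> F" and h: "K \<subset> L \<and> q \<notin> K \<and> insert q K \<in> F"
    have "{insert q K, L} \<subseteq> F" using h L by simp
    hence "\<Union>{insert q K, L} \<in> F" by (rule ucr) simp
    moreover have "\<Union>{insert q K, L} = insert q L" using h by auto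
    ultimately show "insert q L \<in> F" by simp
  qed
  show ?thesis unfolding partial_learning_space_def using pks l1 l2 by simp
qed

definition Fex :: "nat set set" where
  "Fex = {{0}, {1}, {0,2}, {1,2}, {0,1,2}}"

lemma memF: "K \<in> Fex \<longleftrightarrow> K \<subseteq> {0,1,2} \<and> (0 \<in> K \<or> 1 \<in> K) \<and> (0 \<in> K \<and> 1 \<in> K \<longrightarrow> 2 \<in> K)"
proof
  assume "K \<in> Fex" thus "K \<subseteq> {0,1,2} \<and> (0 \<in> K \<or> 1 \<in> K) \<and> (0 \<in> K \<and> 1 \<in> K \<longrightarrow> 2 \<in> K)"
    unfolding Fex_def by auto
next
  assume h: "K \<subseteq> {0,1,2} \<and> (0 \<in> K \<or> 1 \<in> K) \<and> (0 \<in> K \<and> 1 \<in> K \<longrightarrow> 2 \<in> K)"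
  have K: "K = (if 0 \<in> K then {0} else {}) \<union> (if 1 \<in> K then {1} else {}) \<union> (if 2 \<in> K then {2} else {})"
    using h by auto
  show "K \<in> Fex"
  proof (cases "0 \<in> K"; cases "1 \<in> K"; cases "2 \<in> K")
  qed (use h in \<open>(subst K; simp add: Fex_def insert_commute)+\<close>)
qed

lemma HF: "\<forall>K\<in>Fex. \<forall>L\<in>Fex. K \<subset> L \<longrightarrow> (\<exists>q\<in>L-K. insert q K \<in> Fex)"
proof (intro ballI impI)
  fix K L assume K: "K \<in> Fex" and L: "L \<in> Fex" and sub: "K \<subset> L"
  show "\<exists>q\<in>L-K. insert q K \<in> Fex"
  proof (cases "2 \<in> L - K")
    case True
    have "insert 2 K \<in> Fex" using K unfolding memF by auto
    thus ?thesis using True by blast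
  next
    case False
    obtain q where q: "q \<in> L - K" using sub by blast
    have Km: "K \<subseteq> {0,1,2} \<and> (0 \<in> K \<or> 1 \<in> K) \<and> (0 \<in> K \<and> 1 \<in> K \<longrightarrow> 2 \<in> K)"
      using K memF by blast
    have Lm: "L \<subseteq> {0,1,2} \<and> (0 \<in> L \<or> 1 \<in> L) \<and> (0 \<in> L \<and> 1 \<in> L \<longrightarrow> 2 \<in> L)"
      using L memF by blast
    have q3: "q = 0 \<or> q = 1 \<or> q = 2" using q Lm by auto
    have "insert q K \<in> Fex" unfolding memF using Km Lm q q3 False sub by auto
    thus ?thesis using q by blast
  qed
qed

lemma L2F: "axiom_L2 Fex" unfolding axiom_L2_def
proof (intro ballI allI impI)
  fix K L q assume K: "K \<in> Fex" and L: "L \<in> Fex" and h: "K \<subset> L \<and> q \<notin> K \<and> insert q K \<in> Fex"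
  have Km: "K \<subseteq> {0,1,2} \<and> (0 \<in> K \<or> 1 \<in> K) \<and> (0 \<in> K \<and> 1 \<in> K \<longrightarrow> 2 \<in> K)"
    using K by (rule memF[THEN iffD1])
  have Lm: "L \<subseteq> {0,1,2} \<and> (0 \<in> L \<or> 1 \<in> L) \<and> (0 \<in> L \<and> 1 \<in> L \<longrightarrow> 2 \<in> L)"
    using L by (rule memF[THEN iffD1])
  have Im: "insert q K \<subseteq> {0,1,2} \<and> (0 \<in> insert q K \<or> 1 \<in> insert q K) \<and> (0 \<in> insert q K \<and> 1 \<in> insert q K \<longrightarrow> 2 \<in> insert q K)"
    by (rule memF[THEN iffD1]) (use h in blast)
  have q3: "q = 0 \<or> q = 1 \<or> q = 2" using Im by auto
  have sub: "K \<subseteq> L" using h by blast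
  have qK: "q \<notin> K" using h by blast
  have "0 \<in> insert q L \<and> 1 \<in> insert q L \<longrightarrow> 2 \<in> insert q L"
  proof (intro impI)
    assume a: "0 \<in> insert q L \<and> 1 \<in> insert q L"
    show "2 \<in> insert q L"
    proof (cases "q = 2")
      case True thus ?thesis by simp
    next
      case False
      hence "q = 0 \<or> q = 1" using q3 by blast
      hence "0 \<in> insert q K \<and> 1 \<in> insert q K" using Km qK by auto
      hence "2 \<in> K" using Im False by simp
      thus ?thesis using sub by blast
    qed
  qed
  moreover have "insert q L \<subseteq> {0,1,2}" using Lm q3 by blast
  moreover have "0 \<in> insert q L \<or> 1 \<in> insert q L" using Lm by blast
  ultimately show "insert q L \<in> Fex" by (intro memF[THEN iffD2] conjI)
qed

lemma sd: "setdist {0::nat} {1} = 2" unfolding setdist_def by simp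
lemma c1: "setdist {0::nat} {0} = 0" unfolding setdist_def by simp
lemma c2: "setdist {0::nat,2} {1} = 3" unfolding setdist_def by simp
lemma c3: "setdist {0::nat} {1,2} = 3" unfolding setdist_def by simp
lemma c4: "setdist {0::nat} {0,1,2} = 2" unfolding setdist_def by simp

lemma nwgF: "\<not> well_graded Fex"
proof
  assume wg: "well_graded Fex"
  have a: "{0::nat} \<in> Fex" "{1} \<in> Fex" "{0::nat} \<noteq> {1}" by (auto simp: Fex_def)
  obtain S where S: "S 0 = {0}" "S 2 = {1}" "\<forall>i\<le>2. S i \<in> Fex"
      "\<forall>i<2. setdist (S i) (S (Suc i)) = 1"
    using wg[unfolded well_graded_def, rule_format, OF a] unfolding sd by blast
  have d1: "setdist {0} (S 1) = 1" using S(4)[rule_format, of 0] S(1) by simp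
  have d2: "setdist (S 1) {1} = 1" using S(4)[rule_format, of 1] S(2) by (simp add: numeral_2_eq_2)
  have "S 1 \<in> Fex" using S(3) by simp
  hence "S 1 = {0} \<or> S 1 = {1} \<or> S 1 = {0,2} \<or> S 1 = {1,2} \<or> S 1 = {0,1,2}" unfolding Fex_def by blast
  thus False
  proof (elim disjE)
    assume "S 1 = {0}" thus False using d1 c1 by simp
  next
    assume "S 1 = {1}" thus False using d1 sd by simp
  next
    assume "S 1 = {0,2}" thus False using d2 c2 by simp
  next
    assume "S 1 = {1,2}" thus False using d1 c3 by simp
  next
    assume "S 1 = {0,1,2}" thus False using d1 c4 by simp
  qed
qed
lemma U: "\<Union>Fex = {0,1,2}" unfolding Fex_def by auto
lemma n01: "{0::nat,1} \<notin> Fex" unfolding Fex_def by (auto simp: insert_eq_iff)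

lemma part2: "finite Fex \<and> (\<forall>K\<in>Fex. finite K) \<and>
             partial_learning_space Fex \<and> \<not> union_closed Fex \<and> \<not> well_graded Fex"
proof -
  have fin: "\<forall>K\<in>Fex. finite K" unfolding Fex_def by simp
  have pks: "partial_knowledge_structure Fex"
    unfolding partial_knowledge_structure_def U by (simp add: Fex_def)
  have l1: "axiom_L1 Fex" by (rule chain_L1[OF fin HF])
  have nuc: "\<not> union_closed Fex"
  proof
    assume "union_closed Fex"
    moreover have "{{0::nat},{1}} \<subseteq> Fex" by (simp add: Fex_def)
    ultimately have "\<Union>{{0::nat},{1}} \<in> Fex" unfolding union_closed_def by blast
    moreover have "\<Union>{{0::nat},{1}} = {0,1}" by auto
    ultimately have "{0::nat,1} \<in> Fex" by simp
    thus False using n01 by simp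
  qed
  have ff: "finite Fex" unfolding Fex_def by simp
  show ?thesis using ff fin pks l1 L2F nuc nwgF unfolding partial_learning_space_def by simp
qed

theorem lemma5:
  shows "(\<forall>F :: 'a set set. F \<noteq> {} \<and> (\<forall>K\<in>F. finite K) \<and> well_graded F \<and> union_closed F
             \<longrightarrow> partial_learning_space F)
       \<and> (\<exists>F :: nat set set. finite F \<and> (\<forall>K\<in>F. finite K) \<and>
             partial_learning_space F \<and> \<not> union_closed F \<and> \<not> well_graded F)"
  using part1 part2 by blast

end
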